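(* Let $\mathcal{H}$ be a Hilbert superspace of parity $n\in\mathbb{Z}_2$, and let $J_1,J_2$ be two fundamental symmetries for $\mathcal{H}$. Then the Hilbert-space topologies on $\mathcal{H}$ defined by the positive definite scalar products $(x,y)_{J_1}=\langle x,J_1(y)\rangle$ and $(x,y)_{J_2}=\langle x,J_2(y)\rangle$ coincide. Consequently, the algebra $\mathcal{B}(\mathcal{H})$ of continuous endomorphisms of $\mathcal{H}$ does not depend on the choice of fundamental symmetry.
   Context: A complex $\mathbb{Z}_2$-graded vector space is $\mathcal{H}=\mathcal{H}_0\oplus\mathcal{H}_1$; $|x|\in\mathbb{Z}_2$ denotes the degree of a homogeneous element $x$. A sesquilinear form $\langle-,-\rangle$ (antilinear in the first variable) is superhermitian if $\overline{\langle x,y\rangle}=(-1)^{|x||y|}\langle y,x\rangle$ for homogeneous $x,y$. It is homogeneous of degree $n$ if $\langle x,y\rangle=0$ whenever $|x|+|y|\neq n$. A Hilbert superspace of parity $n\in\mathbb{Z}_2$ is a complex $\mathbb{Z}_2$-graded vector space $\mathcal{H}$ with a superhermitian sesquilinear inner product $\langle-,-\rangle$, homogeneous of degree $n$, for which there exists a fundamental symmetry. A fundamental symmetry is an endomorphism $J$ of $\mathcal{H}$, homogeneous of degree $n$, with the following properties for all homogeneous $x,y$: - $J^2(x)=(-1)^{(n+1)|x|}x$; - $\langle J(x),J(y)\rangle=\langle x,y\rangle$; - $(x,y)_J:=\langle x,J(y)\rangle$ is a hermitian positive definite scalar product for which $\mathcal{H}$ is complete. *)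

theory Defs
  imports "HOL-Analysis.Analysis"
begin

(* Degrees are natural numbers read mod 2;
   hspace H0 H1 d is the homogeneous component of degree d mod 2. *)

definition hspace :: "'v set \<Rightarrow> 'v set \<Rightarrow> nat \<Rightarrow> 'v set" where
  "hspace H0 H1 d = (if even d then H0 else H1)"

definition z2_graded ::
  "(complex \<Rightarrow> 'v::ab_group_add \<Rightarrow> 'v) \<Rightarrow> 'v set \<Rightarrow> 'v set \<Rightarrow> bool" where
  "z2_graded smul H0 H1 \<longleftrightarrow>
     vector_space smul \<and> module.subspace smul H0 \<and> module.subspace smul H1 \<and>
     H0 \<inter> H1 = {0} \<and> (\<forall>x. \<exists>a\<in>H0. \<exists>b\<in>H1. x = a + b)"

definition sesquilinear ::
  "(complex \<Rightarrow> 'v::ab_group_add \<Rightarrow> 'v) \<Rightarrow> ('v \<Rightarrow> 'v \<Rightarrow> complex) \<Rightarrow> bool" where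
  "sesquilinear smul B \<longleftrightarrow>
     (\<forall>x x' y. B (x + x') y = B x y + B x' y) \<and>
     (\<forall>x y y'. B x (y + y') = B x y + B x y') \<and>
     (\<forall>c x y. B (smul c x) y = cnj c * B x y) \<and>
     (\<forall>c x y. B x (smul c y) = c * B x y)"

definition superhermitian ::
  "'v set \<Rightarrow> 'v set \<Rightarrow> ('v \<Rightarrow> 'v \<Rightarrow> complex) \<Rightarrow> bool" where
  "superhermitian H0 H1 B \<longleftrightarrow>
     (\<forall>d e x y. d < 2 \<longrightarrow> e < 2 \<longrightarrow> x \<in> hspace H0 H1 d \<longrightarrow> y \<in> hspace H0 H1 e \<longrightarrow>
        cnj (B x y) = (-1) ^ (d * e) * B y x)"

definition form_homogeneous ::
  "'v set \<Rightarrow> 'v set \<Rightarrow> ('v \<Rightarrow> 'v \<Rightarrow> complex) \<Rightarrow> nat \<Rightarrow> bool" where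
  "form_homogeneous H0 H1 B n \<longleftrightarrow>
     (\<forall>d e x y. d < 2 \<longrightarrow> e < 2 \<longrightarrow> x \<in> hspace H0 H1 d \<longrightarrow> y \<in> hspace H0 H1 e \<longrightarrow>
        (d + e) mod 2 \<noteq> n mod 2 \<longrightarrow> B x y = 0)"

definition Jnorm :: "('v \<Rightarrow> 'v \<Rightarrow> complex) \<Rightarrow> ('v \<Rightarrow> 'v) \<Rightarrow> 'v \<Rightarrow> real" where
  "Jnorm B J x = sqrt (Re (B x (J x)))"

definition Jcomplete :: "('v::ab_group_add \<Rightarrow> 'v \<Rightarrow> complex) \<Rightarrow> ('v \<Rightarrow> 'v) \<Rightarrow> bool" where
  "Jcomplete B J \<longleftrightarrow>
     (\<forall>s :: nat \<Rightarrow> 'v.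
        (\<forall>e>0. \<exists>N. \<forall>m\<ge>N. \<forall>k\<ge>N. Jnorm B J (s m - s k) < e) \<longrightarrow>
        (\<exists>L. \<forall>e>0. \<exists>N. \<forall>m\<ge>N. Jnorm B J (s m - L) < e))"

definition fundamental_symmetry ::
  "(complex \<Rightarrow> 'v::ab_group_add \<Rightarrow> 'v) \<Rightarrow> 'v set \<Rightarrow> 'v set \<Rightarrow> ('v \<Rightarrow> 'v \<Rightarrow> complex)
   \<Rightarrow> nat \<Rightarrow> ('v \<Rightarrow> 'v) \<Rightarrow> bool" where
  "fundamental_symmetry smul H0 H1 B n J \<longleftrightarrow>
     Vector_Spaces.linear smul smul J \<and>
     (\<forall>d x. d < 2 \<longrightarrow> x \<in> hspace H0 H1 d \<longrightarrow> J x \<in> hspace H0 H1 (d + n)) \<and>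
     (\<forall>d x. d < 2 \<longrightarrow> x \<in> hspace H0 H1 d \<longrightarrow> J (J x) = smul ((-1) ^ ((n + 1) * d)) x) \<and>
     (\<forall>d e x y. d < 2 \<longrightarrow> e < 2 \<longrightarrow> x \<in> hspace H0 H1 d \<longrightarrow> y \<in> hspace H0 H1 e \<longrightarrow>
        B (J x) (J y) = B x y) \<and>
     (\<forall>x y. B x (J y) = cnj (B y (J x))) \<and>
     (\<forall>x. x \<noteq> 0 \<longrightarrow> 0 < Re (B x (J x))) \<and>
     Jcomplete B J"

definition hilbert_superspace ::
  "(complex \<Rightarrow> 'v::ab_group_add \<Rightarrow> 'v) \<Rightarrow> 'v set \<Rightarrow> 'v set \<Rightarrow> ('v \<Rightarrow> 'v \<Rightarrow> complex)
   \<Rightarrow> nat \<Rightarrow> bool" where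
  "hilbert_superspace smul H0 H1 B n \<longleftrightarrow>
     n < 2 \<and> z2_graded smul H0 H1 \<and> sesquilinear smul B \<and> superhermitian H0 H1 B \<and>
     form_homogeneous H0 H1 B n \<and> (\<exists>J. fundamental_symmetry smul H0 H1 B n J)"

definition Jtopology :: "('v::ab_group_add \<Rightarrow> 'v \<Rightarrow> complex) \<Rightarrow> ('v \<Rightarrow> 'v) \<Rightarrow> 'v topology" where
  "Jtopology B J = topology (\<lambda>U. \<forall>x\<in>U. \<exists>e>0. \<forall>y. Jnorm B J (y - x) < e \<longrightarrow> y \<in> U)"

definition bounded_endos ::
  "(complex \<Rightarrow> 'v::ab_group_add \<Rightarrow> 'v) \<Rightarrow> ('v \<Rightarrow> 'v \<Rightarrow> complex) \<Rightarrow> ('v \<Rightarrow> 'v) \<Rightarrow> ('v \<Rightarrow> 'v) set" where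
  "bounded_endos smul B J =
     {T. Vector_Spaces.linear smul smul T \<and> continuous_map (Jtopology B J) (Jtopology B J) T}"

end

theory Submission
  imports Defs
begin

locale jf =
  fixes smul :: "complex \<Rightarrow> 'v::ab_group_add \<Rightarrow> 'v" and B :: "'v \<Rightarrow> 'v \<Rightarrow> complex" and J :: "'v \<Rightarrow> 'v"
  assumes vs: "vector_space smul"
  and ses: "sesquilinear smul B"
  and lin: "Vector_Spaces.linear smul smul J"
  and herm: "\<And>x y. B x (J y) = cnj (B y (J x))"
  and pos: "\<And>x. x \<noteq> 0 \<Longrightarrow> 0 < Re (B x (J x))"
begin

sublocale V: vector_space smul by (rule vs)
sublocale L: Vector_Spaces.linear smul smul J by (rule lin)

definition q where "q x y = B x (J y)"
definition N where "N x = Jnorm B J x"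

lemma Badd1: "B (x + x') y = B x y + B x' y" and Badd2: "B x (y + y') = B x y + B x y'"
  and Bsc1: "B (smul c x) y = cnj c * B x y" and Bsc2: "B x (smul c y) = c * B x y"
  using ses unfolding sesquilinear_def by auto

lemma Bdiff1: "B (x - x') y = B x y - B x' y"
  by (metis Badd1 add_diff_cancel diff_add_cancel eq_diff_eq)
lemma Bdiff2: "B x (y - y') = B x y - B x y'"
  by (metis Badd2 diff_add_cancel eq_diff_eq)

lemma qadd1: "q (x + x') y = q x y + q x' y" unfolding q_def by (rule Badd1)
lemma qadd2: "q x (y + y') = q x y + q x y'" unfolding q_def by (simp add: L.add Badd2)
lemma qdiff1: "q (x - x') y = q x y - q x' y" unfolding q_def by (rule Bdiff1)
lemma qdiff2: "q x (y - y') = q x y - q x y'" unfolding q_def by (simp add: L.diff Bdiff2)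
lemma qsc1: "q (smul c x) y = cnj c * q x y" unfolding q_def by (rule Bsc1)
lemma qsc2: "q x (smul c y) = c * q x y" unfolding q_def by (simp add: L.scale Bsc2)
lemma qherm: "q x y = cnj (q y x)" unfolding q_def by (rule herm)
lemma q0: "q x 0 = 0" using qdiff2[of x 0 0] by simp
lemma q0': "q 0 x = 0" using qdiff1[of 0 0 x] by simp
lemma qneg1: "q (- x) y = - q x y" using qdiff1[of 0 x y] by (simp add: q0')
lemma qneg2: "q x (- y) = - q x y" using qdiff2[of x 0 y] by (simp add: q0)

lemma qreal: "q x x = complex_of_real (Re (q x x))"
proof -
  have "Im (q x x) = - Im (q x x)" using arg_cong[of _ _ Im, OF qherm[of x x]] by simp
  then show ?thesis by (simp add: complex_eq_iff)
qed

lemma qnonneg: "0 \<le> Re (q x x)"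
proof (cases "x = 0")
  case True then show ?thesis by (simp add: q0)
next
  case False then show ?thesis using pos[of x] unfolding q_def by simp
qed

lemma N_def2: "N x = sqrt (Re (q x x))" unfolding N_def Jnorm_def q_def ..
lemma N_sq: "(N x)^2 = Re (q x x)" unfolding N_def2 using qnonneg[of x] by simp
lemma N_nonneg: "0 \<le> N x" unfolding N_def2 using qnonneg[of x] by simp
lemma N_zero: "N 0 = 0" unfolding N_def2 by (simp add: q0)
lemma N_eq0: "N x = 0 \<longleftrightarrow> x = 0"
proof (cases "x = 0")
  case True then show ?thesis by (simp add: N_zero)
next
  case False then show ?thesis using pos[of x] unfolding N_def2 q_def by simp
qed
lemma N_neg: "N (- x) = N x" unfolding N_def2 by (simp add: qneg1 qneg2)
lemma N_commute: "N (x - y) = N (y - x)" by (metis N_neg minus_diff_eq)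
lemma N_scale: "N (smul c x) = cmod c * N x"
proof -
  have "q (smul c x) (smul c x) = (cnj c * c) * q x x"
    by (simp add: qsc1 qsc2)
  also have "cnj c * c = complex_of_real ((cmod c)^2)"
    by (metis complex_norm_square mult.commute)
  finally have "q (smul c x) (smul c x) = complex_of_real ((cmod c)^2) * q x x" .
  then have "Re (q (smul c x) (smul c x)) = (cmod c)^2 * Re (q x x)" by simp
  then show ?thesis unfolding N_def2 by (simp add: real_sqrt_mult)
qed

lemma cs: "cmod (q x y) \<le> N x * N y"
proof (cases "y = 0")
  case True then show ?thesis by (simp add: q0 N_zero)
next
  case False
  define a where "a = Re (q y y)"
  have a: "a > 0" using pos[OF False] unfolding a_def q_def .
  have qyy: "q y y = complex_of_real a" unfolding a_def by (rule qreal)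
  define p where "p = q y x"
  have qxy: "q x y = cnj p" unfolding p_def by (rule qherm)
  define c where "c = p / complex_of_real a"
  define z where "z = x - smul c y"
  have e1: "q z z = q x x - c * q x y - cnj c * q y x + cnj c * c * q y y"
    unfolding z_def by (simp add: qdiff1 qdiff2 qsc1 qsc2 algebra_simps)
  have pp: "p * cnj p = (complex_of_real (cmod p))^2" by (metis complex_norm_square of_real_power)
  have pp': "cnj p * p = (complex_of_real (cmod p))^2" by (metis complex_norm_square mult.commute of_real_power)
  have "cnj c * c * q y y = complex_of_real ((cmod p)^2 / a)"
    unfolding qyy c_def using a by (simp add: field_simps pp pp')
  moreover have "c * q x y = complex_of_real ((cmod p)^2 / a)"
    unfolding qxy c_def using a by (simp add: field_simps pp pp')
  moreover have "cnj c * q y x = complex_of_real ((cmod p)^2 / a)"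
    unfolding c_def p_def[symmetric] using a by (simp add: field_simps pp pp')
  ultimately have "q x x - c * q x y - cnj c * q y x + cnj c * c * q y y = q x x - complex_of_real ((cmod p)^2 / a)"
    by simp
  with e1 have "Re (q z z) = Re (q x x) - (cmod p)^2 / a" by simp
  with qnonneg[of z] have "(cmod p)^2 / a \<le> Re (q x x)" by simp
  then have "(cmod p)^2 \<le> Re (q x x) * a" using a by (simp add: field_simps)
  also have "\<dots> = (N x * N y)^2" unfolding power_mult_distrib N_sq a_def ..
  finally have "(cmod p)^2 \<le> (N x * N y)^2" .
  then have "cmod p \<le> N x * N y"
    by (rule power2_le_imp_le) (simp add: N_nonneg)
  then show ?thesis unfolding qxy by simp
qed

lemma N_triangle: "N (x + y) \<le> N x + N y"
proof -
  have "Re (q x y + q y x) = 2 * Re (q x y)" by (subst qherm[of y x]) simp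
  also have "\<dots> \<le> 2 * (N x * N y)"
    using complex_Re_le_cmod[of "q x y"] cs[of x y] by linarith
  finally have h: "Re (q x y + q y x) \<le> 2 * (N x * N y)" .
  have "(N (x + y))^2 = Re (q x x) + Re (q y y) + Re (q x y + q y x)"
    unfolding N_sq by (simp add: qadd1 qadd2)
  also have "\<dots> \<le> (N x + N y)^2" using h unfolding power2_sum N_sq[symmetric] by simp
  finally show ?thesis
    by (rule power2_le_imp_le) (simp add: N_nonneg add_nonneg_nonneg)
qed

lemma N_diff_tri: "N (x - z) \<le> N (x - y) + N (y - z)"
  using N_triangle[of "x - y" "y - z"] by simp

end

lemma dominate:
  assumes j1: "jf smul B J1" and j2: "jf smul B J2"
  and comp: "Jcomplete B J1" and surj: "\<And>z. \<exists>w. z = J1 w"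
  shows "\<exists>C>0. \<forall>x. Jnorm B J2 x \<le> C * Jnorm B J1 x"
proof -
  interpret A: jf smul B J1 by (rule j1)
  interpret D: jf smul B J2 by (rule j2)
  define d where "d x y = A.N (x - y)" for x y
  interpret M: Metric_space UNIV d
  proof
    show "d x y = d y x" for x y unfolding d_def by (rule A.N_commute)
  qed (auto simp: d_def A.N_nonneg A.N_eq0 A.N_diff_tri)
  have lim: "limitin M.mtopology s l sequentially \<longleftrightarrow> (\<forall>e>0. \<exists>K. \<forall>m\<ge>K. A.N (s m - l) < e)" for s l
    unfolding M.limitin_metric d_def eventually_sequentially by simp
  have mc: M.mcomplete
    unfolding M.mcomplete_def M.MCauchy_def
  proof (intro allI impI)
    fix s :: "nat \<Rightarrow> _" assume a: "range s \<subseteq> UNIV \<and> (\<forall>\<epsilon>>0. \<exists>N. \<forall>n n'. N \<le> n \<longrightarrow> N \<le> n' \<longrightarrow> d (s n) (s n') < \<epsilon>)"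
    have c: "\<forall>e>0. \<exists>N. \<forall>m\<ge>N. \<forall>k\<ge>N. Jnorm B J1 (s m - s k) < e"
    proof (intro allI impI)
      fix e :: real assume "e > 0"
      with a obtain N where N: "\<forall>n n'. N \<le> n \<longrightarrow> N \<le> n' \<longrightarrow> d (s n) (s n') < e" by auto
      have "\<forall>m\<ge>N. \<forall>k\<ge>N. Jnorm B J1 (s m - s k) < e"
        using N unfolding d_def A.N_def by simp
      then show "\<exists>N. \<forall>m\<ge>N. \<forall>k\<ge>N. Jnorm B J1 (s m - s k) < e" ..
    qed
    obtain L where L: "\<forall>e>0. \<exists>N. \<forall>m\<ge>N. Jnorm B J1 (s m - L) < e"
      using comp[unfolded Jcomplete_def, THEN spec[of _ s], THEN mp, OF c] ..
    have "limitin M.mtopology s L sequentially" unfolding lim A.N_def by (rule L)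
    then show "\<exists>x. limitin M.mtopology s x sequentially" ..
  qed
  define F where "F k = {x. D.N x \<le> real k}" for k :: nat
  have closed: "closedin M.mtopology (F k)" for k
    unfolding M.metric_closedin_iff_sequentially_closed
  proof (intro conjI allI impI)
    fix s :: "nat \<Rightarrow> _" and l assume asm: "range s \<subseteq> F k \<and> limitin M.mtopology s l sequentially"
    then have sk: "D.N (s m) \<le> real k" for m unfolding F_def by auto
    from asm have sl: "\<forall>e>0. \<exists>K. \<forall>m\<ge>K. A.N (s m - l) < e" using lim by blast
    obtain w where w: "J2 l = J1 w" using surj by blast
    have H: "(D.N l)^2 \<le> real k * D.N l + e" if e: "e > 0" for e
    proof -
      have "e / (A.N w + 1) > 0" using e A.N_nonneg[of w] by simp
      then obtain K0 where K0: "\<forall>m\<ge>K0. A.N (s m - l) < e / (A.N w + 1)"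
        using sl by blast
      define K where "K = K0"
      have K: "A.N (s K - l) < e / (A.N w + 1)" using K0 unfolding K_def by simp
      have "(D.N l)^2 = Re (B l (J2 l))" unfolding D.N_sq D.q_def ..
      also have "\<dots> \<le> cmod (B l (J2 l))" by (rule complex_Re_le_cmod)
      also have "B l (J2 l) = B (s K) (J2 l) - B (s K - l) (J1 w)"
        using w by (simp add: A.Bdiff1)
      also have "cmod \<dots> \<le> cmod (B (s K) (J2 l)) + cmod (B (s K - l) (J1 w))"
        by (rule norm_triangle_ineq4)
      also have "cmod (B (s K) (J2 l)) \<le> real k * D.N l"
        using D.cs[of "s K" l] sk[of K] D.N_nonneg[of l] unfolding D.q_def
        by (meson mult_right_mono order_trans)
      also have "cmod (B (s K - l) (J1 w)) \<le> e"
      proof -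
        have "cmod (B (s K - l) (J1 w)) \<le> A.N (s K - l) * A.N w"
          using A.cs[of "s K - l" w] unfolding A.q_def .
        also have "\<dots> \<le> e / (A.N w + 1) * A.N w"
          using mult_right_mono[OF less_imp_le[OF K] A.N_nonneg[of w]] .
        also have "\<dots> \<le> e"
          using A.N_nonneg[of w] e by (simp add: field_simps)
        finally show ?thesis .
      qed
      finally show ?thesis by simp
    qed
    have sq: "D.N l * D.N l \<le> real k * D.N l" using field_le_epsilon[OF H] by (simp add: power2_eq_square)
    have "D.N l \<le> real k"
    proof (rule ccontr)
      assume "\<not> D.N l \<le> real k"
      then have "real k < D.N l" "0 < D.N l" by auto
      then have "real k * D.N l < D.N l * D.N l" by (rule mult_strict_right_mono)
      with sq show False by linarith
    qed
    then show "l \<in> F k" unfolding F_def by simp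
  qed simp
  have un: "\<Union> (range F) = UNIV"
    unfolding F_def using real_arch_simple by blast
  have "\<exists>k. M.mtopology interior_of F k \<noteq> {}"
  proof (rule ccontr)
    assume "\<not> ?thesis"
    then have "M.mtopology interior_of \<Union> (range F) = {}"
      by (intro M.metric_Baire_category_alt mc) (auto simp: closed)
    then show False unfolding un by (metis M.topspace_mtopology interior_of_topspace UNIV_not_empty)
  qed
  then obtain k x0 where x0: "x0 \<in> M.mtopology interior_of F k" by blast
  then obtain r where r: "r > 0" "M.mball x0 r \<subseteq> M.mtopology interior_of F k"
    using openin_interior_of[of M.mtopology "F k"] unfolding M.openin_mtopology by blast
  then have ball: "d x0 y < r \<Longrightarrow> D.N y \<le> real k" for y
    using interior_of_subset[of M.mtopology "F k"] unfolding F_def by (auto simp: M.mball_def)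
  define C where "C = (4 * real k + 1) / r"
  have "C > 0" unfolding C_def using r by simp
  moreover have "D.N h \<le> C * A.N h" for h
  proof (cases "h = 0")
    case True then show ?thesis by (simp add: A.N_zero D.N_zero)
  next
    case False
    then have hp: "A.N h > 0" using A.N_eq0 A.N_nonneg by (metis less_eq_real_def)
    define t where "t = r / (2 * A.N h)"
    have tp: "t > 0" unfolding t_def using hp r by simp
    define h' where "h' = smul (complex_of_real t) h"
    have "A.N h' = t * A.N h" unfolding h'_def A.N_scale using tp by simp
    also have "\<dots> = r / 2" unfolding t_def using hp by simp
    finally have Ah': "A.N h' = r / 2" .
    have "d x0 (x0 + h') < r" unfolding d_def using Ah' r by (simp add: A.N_neg)
    then have b1: "D.N (x0 + h') \<le> real k" by (rule ball)
    have b2: "D.N x0 \<le> real k" using ball[of x0] r by (simp add: d_def A.N_zero)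
    have "D.N h' \<le> D.N (x0 + h') + D.N (- x0)"
      using D.N_triangle[of "x0 + h'" "- x0"] by simp
    then have "D.N h' \<le> 2 * real k" using b1 b2 by (simp add: D.N_neg)
    moreover have "D.N h' = t * D.N h" unfolding h'_def D.N_scale using tp by simp
    ultimately have "t * D.N h \<le> 2 * real k" by simp
    then have "D.N h \<le> 2 * real k / t" using tp by (simp add: field_simps)
    also have "\<dots> = 4 * real k / r * A.N h" unfolding t_def using hp r by (simp add: field_simps)
    also have "\<dots> \<le> C * A.N h" unfolding C_def using hp r by (simp add: field_simps)
    finally show ?thesis .
  qed
  ultimately show ?thesis unfolding A.N_def D.N_def by blast
qed


lemma open_transfer:
  fixes f g :: "'v::ab_group_add \<Rightarrow> real"
  assumes "\<forall>x. f x \<le> C * g x" "C > 0"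
    and "\<forall>x\<in>U. \<exists>e>0. \<forall>y. f (y - x) < e \<longrightarrow> y \<in> U"
  shows "\<forall>x\<in>U. \<exists>e>0. \<forall>y. g (y - x) < e \<longrightarrow> y \<in> U"
proof
  fix x assume "x \<in> U"
  with assms(3) obtain e where e: "e > 0" "\<forall>y. f (y - x) < e \<longrightarrow> y \<in> U" by blast
  have "\<forall>y. g (y - x) < e / C \<longrightarrow> y \<in> U"
  proof (intro allI impI)
    fix y assume "g (y - x) < e / C"
    then have "C * g (y - x) < e" using assms(2) by (simp add: field_simps)
    then have "f (y - x) < e" using assms(1) by (meson le_less_trans)
    then show "y \<in> U" using e by blast
  qed
  moreover have "e / C > 0" using e assms(2) by simp
  ultimately show "\<exists>e>0. \<forall>y. g (y - x) < e \<longrightarrow> y \<in> U" by blast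
qed

lemma surj_fs:
  assumes vs: "vector_space smul" and fs: "fundamental_symmetry smul H0 H1 B n J"
    and dec: "\<forall>x. \<exists>a\<in>H0. \<exists>b\<in>H1. x = a + b"
  shows "\<exists>w. z = J w"
proof -
  interpret V: vector_space smul by (rule vs)
  have lin: "Vector_Spaces.linear smul smul J"
    and JJ: "\<And>d x. d < 2 \<Longrightarrow> x \<in> hspace H0 H1 d \<Longrightarrow> J (J x) = smul ((-1) ^ ((n + 1) * d)) x"
    using fs unfolding fundamental_symmetry_def by blast+
  interpret L: Vector_Spaces.linear smul smul J by (rule lin)
  have hom: "\<exists>w. x = J w" if d: "d < 2" "x \<in> hspace H0 H1 d" for d x
  proof -
    define c :: complex where "c = (-1) ^ ((n + 1) * d)"
    have "c * c = ((-1) * (-1)) ^ ((n + 1) * d)" unfolding c_def by (rule power_mult_distrib[symmetric])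
    then have cc: "c * c = 1" by simp
    have "J (smul c (J x)) = smul c (J (J x))" by (rule L.scale)
    also have "\<dots> = smul c (smul c x)" using JJ[OF d] unfolding c_def by simp
    also have "\<dots> = x" by (simp add: cc)
    finally have "x = J (smul c (J x))" ..
    then show ?thesis ..
  qed
  obtain a b where ab: "a \<in> H0" "b \<in> H1" "z = a + b" using dec by blast
  have "\<exists>w. a = J w" using hom[of 0 a] ab by (simp add: hspace_def)
  then obtain wa where "a = J wa" ..
  moreover have "\<exists>w. b = J w" using hom[of 1 b] ab by (simp add: hspace_def)
  then obtain wb where "b = J wb" ..
  ultimately have "z = J (wa + wb)" using ab by (simp add: L.add)
  then show ?thesis ..
qed

lemma jf_fs:
  assumes vs: "vector_space smul" and ses: "sesquilinear smul B"
    and fs: "fundamental_symmetry smul H0 H1 B n J"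
  shows "jf smul B J"
proof -
  have "Vector_Spaces.linear smul smul J" "\<forall>x y. B x (J y) = cnj (B y (J x))"
    "\<forall>x. x \<noteq> 0 \<longrightarrow> 0 < Re (B x (J x))"
    using fs unfolding fundamental_symmetry_def by blast+
  then show ?thesis unfolding jf_def using vs ses by blast
qed

theorem mainTheorem1:
  fixes smul :: "complex \<Rightarrow> 'v::ab_group_add \<Rightarrow> 'v"
    and H0 H1 :: "'v set" and B :: "'v \<Rightarrow> 'v \<Rightarrow> complex" and n :: nat
    and J1 J2 :: "'v \<Rightarrow> 'v"
  assumes "hilbert_superspace smul H0 H1 B n"
    and "fundamental_symmetry smul H0 H1 B n J1"
    and "fundamental_symmetry smul H0 H1 B n J2"
  shows "Jtopology B J1 = Jtopology B J2 \<and> bounded_endos smul B J1 = bounded_endos smul B J2"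
proof -
  have vs: "vector_space smul" and ses: "sesquilinear smul B"
    and dec: "\<forall>x. \<exists>a\<in>H0. \<exists>b\<in>H1. x = a + b"
    using assms(1) unfolding hilbert_superspace_def z2_graded_def by blast+
  have j1: "jf smul B J1" by (rule jf_fs[OF vs ses assms(2)])
  have j2: "jf smul B J2" by (rule jf_fs[OF vs ses assms(3)])
  have c1: "Jcomplete B J1" using assms(2) unfolding fundamental_symmetry_def by blast
  have c2: "Jcomplete B J2" using assms(3) unfolding fundamental_symmetry_def by blast
  obtain C where C: "C > 0" "\<forall>x. Jnorm B J2 x \<le> C * Jnorm B J1 x"
    using dominate[OF j1 j2 c1 surj_fs[OF vs assms(2) dec]] by blast
  obtain C' where C': "C' > 0" "\<forall>x. Jnorm B J1 x \<le> C' * Jnorm B J2 x"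
    using dominate[OF j2 j1 c2 surj_fs[OF vs assms(3) dec]] by blast
  have "(\<lambda>U. \<forall>x\<in>U. \<exists>e>0. \<forall>y. Jnorm B J1 (y - x) < e \<longrightarrow> y \<in> U)
      = (\<lambda>U. \<forall>x\<in>U. \<exists>e>0. \<forall>y. Jnorm B J2 (y - x) < e \<longrightarrow> y \<in> U)"
  proof (rule ext, rule iffI)
    fix U assume "\<forall>x\<in>U. \<exists>e>0. \<forall>y. Jnorm B J1 (y - x) < e \<longrightarrow> y \<in> U"
    then show "\<forall>x\<in>U. \<exists>e>0. \<forall>y. Jnorm B J2 (y - x) < e \<longrightarrow> y \<in> U"
      by (rule open_transfer[OF C'(2) C'(1)])
  next
    fix U assume "\<forall>x\<in>U. \<exists>e>0. \<forall>y. Jnorm B J2 (y - x) < e \<longrightarrow> y \<in> U"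
    then show "\<forall>x\<in>U. \<exists>e>0. \<forall>y. Jnorm B J1 (y - x) < e \<longrightarrow> y \<in> U"
      by (rule open_transfer[OF C(2) C(1)])
  qed
  then have T: "Jtopology B J1 = Jtopology B J2" unfolding Jtopology_def by simp
  then show ?thesis unfolding bounded_endos_def by simp
qed

end
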